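(* In the allocation problem and Synchronized Greedy (SG) mechanism described in the context, let $\ell\ge 1$ and suppose $\min_j q_j\ge \max_{S:|S|=\ell}\sum_{i\in S} r_i$. Then for every set $S$ of $\ell$ agents there is no bid profile $\sigma$ with $\sigma_i=\pi_i$ for all $i\notin S$ such that every $i\in S$ weakly prefers $a^\sigma_{i*}$ to $a^\pi_{i*}$ (i.e., $a^\sigma_{i*}=a^\pi_{i*}$ or $a^\sigma_{i*}>_i a^\pi_{i*}$) and at least one $i\in S$ has $a^\sigma_{i*}>_i a^\pi_{i*}$.
   Context: There are $m$ distinct divisible goods; good $j$ is available in amount $q_j>0$. There are $n$ agents; agent $i$ is to receive a total of $r_i>0$, with $\sum_j q_j=\sum_i r_i$. An allocation is a family $a_{ij}\ge 0$ with $\sum_j a_{ij}=r_i$ and $\sum_i a_{ij}=q_j$; $a_{i*}=(a_{i1},\ldots,a_{im})$ is agent $i$'s share. Each agent $i$ has a true preference list $\pi_i$, a permutation of the goods ($\pi_i(1)$ most preferred); $\pi=(\pi_1,\ldots,\pi_n)$. Agent $i$ prefers $a_{i*}$ to $b_{i*}$, written $a_{i*}>_i b_{i*}$, if the leftmost nonzero coordinate of $(a_{i\pi_i(k)}-b_{i\pi_i(k)})_{k=1}^m$ is positive. The SG mechanism: each agent $i$ bids a permutation $\sigma_i$ of the goods; over time $t\in[0,1]$ each agent $i$ receives, at rate $r_i$, the good highest in $\sigma_i$ among those not yet exhausted (a good is exhausted when the total amount handed out equals $q_j$; several agents may receive a good simultaneously; upon exhaustion, agents receiving it switch instantly to their next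 non-exhausted good). $a^\sigma_{ij}$ is the total amount of good $j$ agent $i$ receives under bid profile $\sigma$. *)

theory Defs
  imports Main "HOL.Real"
begin

text \<open>Conventions: agents are 0..<n, goods are 0..<m. A preference list / bid of agent i
  is a function p i :: nat => nat, a bijection of {..<m}, with p i k the (k+1)-st most
  preferred good. An allocation is a :: nat => nat => real, a i j = amount of good j to agent i.\<close>

definition strict_pref :: "nat \<Rightarrow> (nat \<Rightarrow> nat) \<Rightarrow> (nat \<Rightarrow> real) \<Rightarrow> (nat \<Rightarrow> real) \<Rightarrow> bool" where
  "strict_pref m p x y \<longleftrightarrow>
     (\<exists>k<m. (\<forall>k'<k. x (p k') = y (p k')) \<and> x (p k) > y (p k))"

definition weak_pref :: "nat \<Rightarrow> (nat \<Rightarrow> nat) \<Rightarrow> (nat \<Rightarrow> real) \<Rightarrow> (nat \<Rightarrow> real) \<Rightarrow> bool" where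
  "weak_pref m p x y \<longleftrightarrow> (\<forall>j<m. x j = y j) \<or> strict_pref m p x y"

text \<open>Synchronized Greedy, simulated phase by phase. State: (current time t,
  remaining amounts rem, amounts handed out so far). A good j is exhausted iff rem j \<le> 0.\<close>

definition eats :: "nat \<Rightarrow> (nat \<Rightarrow> nat \<Rightarrow> nat) \<Rightarrow> (nat \<Rightarrow> real) \<Rightarrow> nat \<Rightarrow> nat \<Rightarrow> bool" where
  "eats m \<sigma> rem i j \<longleftrightarrow>
     (\<exists>k<m. rem (\<sigma> i k) > 0) \<and> j = \<sigma> i (LEAST k. k < m \<and> rem (\<sigma> i k) > 0)"

definition eat_rate :: "nat \<Rightarrow> nat \<Rightarrow> (nat \<Rightarrow> real) \<Rightarrow> (nat \<Rightarrow> nat \<Rightarrow> nat) \<Rightarrow> (nat \<Rightarrow> real) \<Rightarrow> nat \<Rightarrow> real" where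
  "eat_rate n m r \<sigma> rem j = (\<Sum>i<n. if eats m \<sigma> rem i j then r i else 0)"

definition phase_len :: "nat \<Rightarrow> nat \<Rightarrow> (nat \<Rightarrow> real) \<Rightarrow> (nat \<Rightarrow> nat \<Rightarrow> nat) \<Rightarrow> real \<Rightarrow> (nat \<Rightarrow> real) \<Rightarrow> real" where
  "phase_len n m r \<sigma> t rem =
     Min (insert (1 - t) ((\<lambda>j. rem j / eat_rate n m r \<sigma> rem j) `
                          {j. j < m \<and> 0 < eat_rate n m r \<sigma> rem j}))"

definition sg_step :: "nat \<Rightarrow> nat \<Rightarrow> (nat \<Rightarrow> real) \<Rightarrow> (nat \<Rightarrow> nat \<Rightarrow> nat) \<Rightarrow>
     real \<times> (nat \<Rightarrow> real) \<times> (nat \<Rightarrow> nat \<Rightarrow> real) \<Rightarrow> real \<times> (nat \<Rightarrow> real) \<times> (nat \<Rightarrow> nat \<Rightarrow> real)" where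
  "sg_step n m r \<sigma> st =
     (case st of (t, rem, a) \<Rightarrow>
       let d = phase_len n m r \<sigma> t rem in
       (t + d,
        \<lambda>j. rem j - eat_rate n m r \<sigma> rem j * d,
        \<lambda>i j. a i j + (if i < n \<and> eats m \<sigma> rem i j then r i * d else 0)))"

text \<open>Each phase either ends at time 1 or exhausts a good, so m phases suffice.\<close>
definition SG :: "nat \<Rightarrow> nat \<Rightarrow> (nat \<Rightarrow> real) \<Rightarrow> (nat \<Rightarrow> real) \<Rightarrow> (nat \<Rightarrow> nat \<Rightarrow> nat) \<Rightarrow> nat \<Rightarrow> nat \<Rightarrow> real" where
  "SG n m q r \<sigma> = snd (snd ((sg_step n m r \<sigma> ^^ m) (0, q, \<lambda>i j. 0)))"

end

theory Submission
  imports Defs "HOL-Analysis.Analysis"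
begin

lemma real_induct_mono:
  fixes h :: "real \<Rightarrow> real"
  assumes ab: "a \<le> b" and cont: "continuous_on {a..b} h"
    and loc: "\<And>t. a \<le> t \<Longrightarrow> t < b \<Longrightarrow> \<exists>\<epsilon>>0. \<forall>s. t \<le> s \<and> s \<le> t + \<epsilon> \<and> s \<le> b \<longrightarrow> h t \<le> h s"
  shows "h a \<le> h b"
proof -
  define A where "A = {x\<in>{a..b}. \<forall>y\<in>{a..x}. h a \<le> h y}"
  have aA: "a \<in> A" using ab by (auto simp: A_def)
  have bdd: "bdd_above A" unfolding A_def by (rule bdd_aboveI[of _ b]) auto
  define s where "s = Sup A"
  have as: "a \<le> s" unfolding s_def using aA bdd by (meson cSup_upper)
  have sb: "s \<le> b" unfolding s_def using aA by (intro cSup_least) (auto simp: A_def)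
  have below: "h a \<le> h y" if "a \<le> y" "y < s" for y
  proof -
    obtain x where "x \<in> A" "y < x" using \<open>y < s\<close> aA unfolding s_def
      by (metis empty_iff less_cSup_iff bdd)
    thus ?thesis using that by (auto simp: A_def)
  qed
  have cl: "closed ({a..b} \<inter> h -` {h a..})"
    by (rule continuous_closed_preimage[OF cont]) auto
  have sA: "\<forall>y\<in>{a..s}. h a \<le> h y"
  proof (cases "a = s")
    case True thus ?thesis by auto
  next
    case False
    hence "a < s" using as by auto
    have "{a..<s} \<subseteq> {a..b} \<inter> h -` {h a..}" using below sb by auto
    hence "closure {a..<s} \<subseteq> {a..b} \<inter> h -` {h a..}"
      using cl closure_minimal by blast
    thus ?thesis using \<open>a < s\<close> by auto
  qed
  have "s = b"
  proof (rule ccontr)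
    assume "s \<noteq> b"
    hence "s < b" using sb by auto
    obtain e where e: "e > 0" "\<forall>u. s \<le> u \<and> u \<le> s + e \<and> u \<le> b \<longrightarrow> h s \<le> h u"
      using loc[OF as \<open>s < b\<close>] by blast
    define s' where "s' = min (s + e) b"
    have "s' \<in> A"
    proof -
      have "h a \<le> h y" if "y \<in> {a..s'}" for y
      proof (cases "y \<le> s")
        case True thus ?thesis using sA that by auto
      next
        case False
        hence "h s \<le> h y" using e that by (auto simp: s'_def)
        moreover have "h a \<le> h s" using sA as by auto
        ultimately show ?thesis by linarith
      qed
      thus ?thesis using as \<open>s < b\<close> e by (auto simp: A_def s'_def)
    qed
    hence "s' \<le> s" unfolding s_def using bdd by (rule cSup_upper)
    thus False using e \<open>s < b\<close> by (auto simp: s'_def)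
  qed
  thus ?thesis using sA ab by auto
qed

definition remf :: "nat \<Rightarrow> (nat \<Rightarrow> real) \<Rightarrow> (nat \<Rightarrow> nat \<Rightarrow> real \<Rightarrow> real) \<Rightarrow> real \<Rightarrow> nat \<Rightarrow> real" where
  "remf n q c t j = q j - (\<Sum>i<n. c i j t)"

definition run :: "nat \<Rightarrow> nat \<Rightarrow> (nat \<Rightarrow> real) \<Rightarrow> (nat \<Rightarrow> real) \<Rightarrow> (nat \<Rightarrow> nat \<Rightarrow> nat) \<Rightarrow> (nat \<Rightarrow> nat \<Rightarrow> real \<Rightarrow> real) \<Rightarrow> bool" where
  "run n m q r b c \<longleftrightarrow> (\<forall>i j. continuous_on {0..1} (c i j)) \<and> (\<forall>i j. c i j 0 = 0) \<and>
     (\<forall>t. 0 \<le> t \<and> t < 1 \<longrightarrow> (\<exists>\<epsilon>>0. t + \<epsilon> \<le> 1 \<and> (\<forall>s. t \<le> s \<and> s \<le> t + \<epsilon> \<longrightarrow>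
        (\<forall>i<n. \<forall>j<m. c i j s = c i j t + (if eats m b (remf n q c t) i j then r i * (s - t) else 0))))) \<and>
     (\<forall>t. 0 \<le> t \<and> t \<le> 1 \<longrightarrow> (\<forall>j<m. 0 \<le> remf n q c t j))"

lemma eats_iff:
  "eats m b rem i g \<longleftrightarrow> (\<exists>kg<m. g = b i kg \<and> rem g > 0 \<and> (\<forall>k<kg. \<not> rem (b i k) > 0))"
proof
  assume "eats m b rem i g"
  then obtain k0 where k0: "k0 < m" "rem (b i k0) > 0" and g: "g = b i (LEAST k. k < m \<and> rem (b i k) > 0)"
    unfolding eats_def by blast
  define kg where "kg = (LEAST k. k < m \<and> rem (b i k) > 0)"
  have "kg < m \<and> rem (b i kg) > 0" unfolding kg_def by (rule LeastI[of _ k0]) (use k0 in auto)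
  moreover have "\<forall>k<kg. \<not> rem (b i k) > 0"
  proof (intro allI impI)
    fix k assume "k < kg"
    hence "\<not> (k < m \<and> rem (b i k) > 0)" unfolding kg_def by (rule not_less_Least)
    thus "\<not> rem (b i k) > 0" using \<open>k < kg\<close> \<open>kg < m \<and> _\<close> by auto
  qed
  ultimately show "\<exists>kg<m. g = b i kg \<and> rem g > 0 \<and> (\<forall>k<kg. \<not> rem (b i k) > 0)"
  proof -
    assume a: "kg < m \<and> rem (b i kg) > 0" "\<forall>k<kg. \<not> rem (b i k) > 0"
    have "g = b i kg" using g kg_def by simp
    thus ?thesis using a by blast
  qed
next
  assume "\<exists>kg<m. g = b i kg \<and> rem g > 0 \<and> (\<forall>k<kg. \<not> rem (b i k) > 0)"
  then obtain kg where kg: "kg < m" "g = b i kg" "rem g > 0" "\<forall>k<kg. \<not> rem (b i k) > 0" by blast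
  have "(LEAST k. k < m \<and> rem (b i k) > 0) = kg"
  proof (rule Least_equality)
    show "kg < m \<and> rem (b i kg) > 0" using kg by auto
    fix y assume "y < m \<and> rem (b i y) > 0"
    thus "kg \<le> y" using kg(4) by (meson not_le)
  qed
  thus "eats m b rem i g" unfolding eats_def using kg by auto
qed

lemma eats_avail: "eats m b rem i j \<Longrightarrow> rem j > 0"
  by (auto simp: eats_iff)

lemma eats_unique: "eats m b rem i j \<Longrightarrow> eats m b rem i j' \<Longrightarrow> j = j'"
  by (auto simp: eats_def)

lemma eats_exists: "k < m \<Longrightarrow> rem (b i k) > 0 \<Longrightarrow> \<exists>k'\<le>k. eats m b rem i (b i k')"
proof -
  assume a: "k < m" "rem (b i k) > 0"
  define kg where "kg = (LEAST k. k < m \<and> rem (b i k) > 0)"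
  have "kg \<le> k" unfolding kg_def by (rule Least_le) (use a in auto)
  moreover have "eats m b rem i (b i kg)" unfolding eats_def kg_def using a by auto
  ultimately show ?thesis by blast
qed

lemma eats_cong: "(\<And>k. k < m \<Longrightarrow> b' i k = b i k) \<Longrightarrow> eats m b' rem i j = eats m b rem i j"
proof -
  assume h: "\<And>k. k < m \<Longrightarrow> b' i k = b i k"
  have e: "(\<lambda>k. k < m \<and> rem (b' i k) > 0) = (\<lambda>k. k < m \<and> rem (b i k) > 0)"
    using h by auto
  have ex: "(\<exists>k<m. rem (b' i k) > 0) = (\<exists>k<m. rem (b i k) > 0)" using h by auto
  show ?thesis
  proof (cases "\<exists>k<m. rem (b i k) > 0")
    case True
    define L where "L = (LEAST k. k < m \<and> rem (b i k) > 0)"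
    have "L < m" unfolding L_def using True by (metis (mono_tags, lifting) LeastI)
    hence "b' i L = b i L" using h by auto
    moreover have "(LEAST k. k < m \<and> rem (b' i k) > 0) = L" unfolding L_def using e by simp
    ultimately show ?thesis unfolding eats_def using ex True L_def by simp
  next
    case False thus ?thesis unfolding eats_def using ex by blast
  qed
qed

locale runl =
  fixes n m :: nat and q r :: "nat \<Rightarrow> real" and b :: "nat \<Rightarrow> nat \<Rightarrow> nat" and c :: "nat \<Rightarrow> nat \<Rightarrow> real \<Rightarrow> real"
  assumes run: "run n m q r b c" and rpos: "\<forall>i<n. 0 < r i"
begin

lemma cont: "continuous_on {0..1} (c i j)" using run by (auto simp: run_def)
lemma c0: "c i j 0 = 0" using run by (auto simp: run_def)
lemma loc: "0 \<le> t \<Longrightarrow> t < 1 \<Longrightarrow> \<exists>\<epsilon>>0. t + \<epsilon> \<le> 1 \<and> (\<forall>s. t \<le> s \<and> s \<le> t + \<epsilon> \<longrightarrow>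
        (\<forall>i<n. \<forall>j<m. c i j s = c i j t + (if eats m b (remf n q c t) i j then r i * (s - t) else 0)))"
  using run unfolding run_def by blast
lemma remnn: "0 \<le> t \<Longrightarrow> t \<le> 1 \<Longrightarrow> j < m \<Longrightarrow> 0 \<le> remf n q c t j"
  using run by (auto simp: run_def)

lemma locE:
  assumes "0 \<le> t" "t < 1"
  obtains e where "e > 0" "t + e \<le> 1"
    "\<And>s i j. t \<le> s \<Longrightarrow> s \<le> t + e \<Longrightarrow> i < n \<Longrightarrow> j < m \<Longrightarrow>
       c i j s = c i j t + (if eats m b (remf n q c t) i j then r i * (s - t) else 0)"
  using loc[OF assms] by blast

lemma cont_sub: "0 \<le> x \<Longrightarrow> y \<le> 1 \<Longrightarrow> continuous_on {x..y} (c i j)"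
  by (rule continuous_on_subset[OF cont]) auto

lemma rem_cont: "continuous_on {0..1} (\<lambda>t. remf n q c t j)"
  unfolding remf_def by (intro continuous_intros cont)

lemma cmono: assumes "0 \<le> x" "x \<le> y" "y \<le> 1" "i < n" "j < m" shows "c i j x \<le> c i j y"
proof (rule real_induct_mono[OF \<open>x \<le> y\<close> cont_sub[OF assms(1,3)]])
  fix t assume t: "x \<le> t" "t < y"
  have t0: "0 \<le> t" and t1: "t < 1" using t assms by auto
  obtain e where e: "e > 0" and e1: "t + e \<le> 1" and eq: "\<And>s i j. t \<le> s \<Longrightarrow> s \<le> t + e \<Longrightarrow> i < n \<Longrightarrow> j < m \<Longrightarrow>
       c i j s = c i j t + (if eats m b (remf n q c t) i j then r i * (s - t) else 0)"
    by (rule locE[OF t0 t1]) blast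
  show "\<exists>\<epsilon>>0. \<forall>s. t \<le> s \<and> s \<le> t + \<epsilon> \<and> s \<le> y \<longrightarrow> c i j t \<le> c i j s"
  proof (intro exI[of _ e] conjI allI impI e)
    fix s assume s: "t \<le> s \<and> s \<le> t + e \<and> s \<le> y"
    have "c i j s = c i j t + (if eats m b (remf n q c t) i j then r i * (s - t) else 0)"
      using eq[of s i j] s assms by blast
    moreover have "r i > 0" using rpos assms by auto
    ultimately show "c i j t \<le> c i j s" using s by auto
  qed
qed

lemma cnn: "0 \<le> x \<Longrightarrow> x \<le> 1 \<Longrightarrow> i < n \<Longrightarrow> j < m \<Longrightarrow> 0 \<le> c i j x"
  using cmono[of 0 x] c0 by auto

lemma cslope: assumes "0 \<le> x" "x \<le> y" "y \<le> 1" "i < n" "j < m" shows "c i j y - c i j x \<le> r i * (y - x)"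
proof -
  have "(\<lambda>s. r i * s - c i j s) x \<le> (\<lambda>s. r i * s - c i j s) y"
  proof (rule real_induct_mono[OF \<open>x \<le> y\<close>])
    show "continuous_on {x..y} (\<lambda>s. r i * s - c i j s)"
      by (intro continuous_intros cont_sub) (use assms in auto)
    fix t assume t: "x \<le> t" "t < y"
    have t0: "0 \<le> t" and t1: "t < 1" using t assms by auto
    obtain e where e: "e > 0" and e1: "t + e \<le> 1" and eq: "\<And>s i j. t \<le> s \<Longrightarrow> s \<le> t + e \<Longrightarrow> i < n \<Longrightarrow> j < m \<Longrightarrow>
         c i j s = c i j t + (if eats m b (remf n q c t) i j then r i * (s - t) else 0)"
      by (rule locE[OF t0 t1]) blast
    show "\<exists>\<epsilon>>0. \<forall>s. t \<le> s \<and> s \<le> t + \<epsilon> \<and> s \<le> y \<longrightarrow> r i * t - c i j t \<le> r i * s - c i j s"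
    proof (intro exI[of _ e] conjI allI impI e)
      fix s assume s: "t \<le> s \<and> s \<le> t + e \<and> s \<le> y"
      have "c i j s = c i j t + (if eats m b (remf n q c t) i j then r i * (s - t) else 0)"
        using eq[of s i j] s assms by blast
      moreover have "0 \<le> r i" using rpos assms by force
      hence "r i * t \<le> r i * s" using s by (simp add: mult_left_mono)
      ultimately show "r i * t - c i j t \<le> r i * s - c i j s" by (auto simp: algebra_simps)
    qed
  qed
  thus ?thesis by (auto simp: algebra_simps)
qed

lemma rem_anti: assumes "0 \<le> x" "x \<le> y" "y \<le> 1" "j < m" shows "remf n q c y j \<le> remf n q c x j"
  unfolding remf_def using cmono[OF assms(1-3) _ assms(4)] by (auto intro: sum_mono)

lemma cnever: assumes "0 \<le> x" "x \<le> y" "y \<le> 1" "i < n" "j < m"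
  and ne: "\<And>t. x \<le> t \<Longrightarrow> t < y \<Longrightarrow> \<not> eats m b (remf n q c t) i j"
  shows "c i j y = c i j x"
proof -
  have "(\<lambda>s. - c i j s) x \<le> (\<lambda>s. - c i j s) y"
  proof (rule real_induct_mono[OF \<open>x \<le> y\<close>])
    show "continuous_on {x..y} (\<lambda>s. - c i j s)"
      by (intro continuous_intros cont_sub) (use assms in auto)
    fix t assume t: "x \<le> t" "t < y"
    have t0: "0 \<le> t" and t1: "t < 1" using t assms by auto
    obtain e where e: "e > 0" and e1: "t + e \<le> 1" and eq: "\<And>s i j. t \<le> s \<Longrightarrow> s \<le> t + e \<Longrightarrow> i < n \<Longrightarrow> j < m \<Longrightarrow>
         c i j s = c i j t + (if eats m b (remf n q c t) i j then r i * (s - t) else 0)"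
      by (rule locE[OF t0 t1]) blast
    show "\<exists>\<epsilon>>0. \<forall>s. t \<le> s \<and> s \<le> t + \<epsilon> \<and> s \<le> y \<longrightarrow> - c i j t \<le> - c i j s"
    proof (intro exI[of _ e] conjI allI impI e)
      fix s assume s: "t \<le> s \<and> s \<le> t + e \<and> s \<le> y"
      have "c i j s = c i j t + (if eats m b (remf n q c t) i j then r i * (s - t) else 0)"
        using eq[of s i j] s assms by blast
      thus "- c i j t \<le> - c i j s" using ne[OF t] by auto
    qed
  qed
  thus ?thesis using cmono[OF assms(1-5)] by auto
qed

lemma cstart: assumes "0 \<le> x" "x \<le> y" "y \<le> 1" "i < n" "j < m" "c i j x < c i j y"
  shows "\<exists>t. x \<le> t \<and> t < y \<and> eats m b (remf n q c t) i j"
  using cnever[OF assms(1-5)] assms(6) by force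

lemma cstuck: assumes "0 \<le> x" "x \<le> y" "y \<le> 1" "i < n" "j < m" "remf n q c x j \<le> 0"
  shows "c i j y = c i j x"
proof (rule cnever[OF assms(1-5)])
  fix t assume "x \<le> t" "t < y"
  hence "remf n q c t j \<le> 0" using rem_anti[of x t j] assms by auto
  thus "\<not> eats m b (remf n q c t) i j" using eats_avail by fastforce
qed

end

lemma sum_single_if:
  fixes x :: real
  assumes "finite K" "inj_on p K" "\<And>j j'. P j \<Longrightarrow> P j' \<Longrightarrow> j = j'"
  shows "(\<Sum>k\<in>K. if P (p k) then x else 0) = (if \<exists>k\<in>K. P (p k) then x else 0)"
proof (cases "\<exists>k\<in>K. P (p k)")
  case True
  then obtain k0 where k0: "k0 \<in> K" "P (p k0)" by blast
  have "(\<Sum>k\<in>K. if P (p k) then x else 0) = (\<Sum>k\<in>K. if k = k0 then x else 0)"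
  proof (rule sum.cong[OF refl])
    fix k assume "k \<in> K"
    have "P (p k) \<longleftrightarrow> k = k0"
      using assms(2,3) k0 \<open>k \<in> K\<close> by (metis inj_onD)
    thus "(if P (p k) then x else 0) = (if k = k0 then x else 0)" by simp
  qed
  also have "\<dots> = x" using k0 assms(1) by simp
  finally show ?thesis using True by simp
qed simp

lemma lex:
  assumes R: "runl n m q r \<pi> c" and R': "runl n m q r \<sigma> c'"
    and i: "i < n" and bij: "bij_betw (\<pi> i) {..<m} {..<m}" and T: "0 \<le> T" "T \<le> 1"
    and av: "\<And>t j. 0 \<le> t \<Longrightarrow> t < T \<Longrightarrow> j < m \<Longrightarrow> eats m \<sigma> (remf n q c' t) i j \<Longrightarrow> 0 < remf n q c t j"
    and k: "k < m" and eq: "\<And>k'. k' < k \<Longrightarrow> c' i (\<pi> i k') T = c i (\<pi> i k') T"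
  shows "c' i (\<pi> i k) T \<le> c i (\<pi> i k) T"
proof -
  define h where "h t = (\<Sum>k'\<in>{..k}. c i (\<pi> i k') t) - (\<Sum>k'\<in>{..k}. c' i (\<pi> i k') t)" for t
  have pim: "\<pi> i k' < m" if "k' \<le> k" for k' using bij k that unfolding bij_betw_def by auto
  have injk: "inj_on (\<pi> i) {..k}"
  proof -
    have "inj_on (\<pi> i) {..<m}" using bij unfolding bij_betw_def by blast
    moreover have "{..k} \<subseteq> {..<m}" using k by auto
    ultimately show ?thesis by (rule inj_on_subset)
  qed
  have "h 0 \<le> h T"
  proof (rule real_induct_mono[OF T(1)])
    show "continuous_on {0..T} h" unfolding h_def
      by (intro continuous_intros runl.cont_sub[OF R] runl.cont_sub[OF R']) (use T in auto)
    fix t assume t: "0 \<le> t" "t < T"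
    have t0: "0 \<le> t" and t1: "t < 1" using t T by auto
    obtain e1 where e1: "e1 > 0" and e11: "t + e1 \<le> 1" and eq1: "\<And>s i j. t \<le> s \<Longrightarrow> s \<le> t + e1 \<Longrightarrow> i < n \<Longrightarrow> j < m \<Longrightarrow>
       c i j s = c i j t + (if eats m \<pi> (remf n q c t) i j then r i * (s - t) else 0)"
      by (rule runl.locE[OF R t0 t1]) blast
    obtain e2 where e2: "e2 > 0" and e21: "t + e2 \<le> 1" and eq2: "\<And>s i j. t \<le> s \<Longrightarrow> s \<le> t + e2 \<Longrightarrow> i < n \<Longrightarrow> j < m \<Longrightarrow>
       c' i j s = c' i j t + (if eats m \<sigma> (remf n q c' t) i j then r i * (s - t) else 0)"
      by (rule runl.locE[OF R' t0 t1]) blast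
    show "\<exists>\<epsilon>>0. \<forall>s. t \<le> s \<and> s \<le> t + \<epsilon> \<and> s \<le> T \<longrightarrow> h t \<le> h s"
    proof (intro exI[of _ "min e1 e2"] conjI allI impI)
      show "min e1 e2 > 0" using e1 e2 by auto
      fix s assume s: "t \<le> s \<and> s \<le> t + min e1 e2 \<and> s \<le> T"
      have sa: "t \<le> s" "s \<le> t + e1" "s \<le> t + e2" using s by auto
      define P where "P = eats m \<pi> (remf n q c t) i"
      define P' where "P' = eats m \<sigma> (remf n q c' t) i"
      have s1: "(\<Sum>k'\<in>{..k}. c i (\<pi> i k') s) = (\<Sum>k'\<in>{..k}. c i (\<pi> i k') t) + (\<Sum>k'\<in>{..k}. if P (\<pi> i k') then r i * (s - t) else 0)"
        unfolding sum.distrib[symmetric] P_def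
        by (rule sum.cong[OF refl], rule eq1[OF sa(1) sa(2) i pim]) auto
      have s2: "(\<Sum>k'\<in>{..k}. c' i (\<pi> i k') s) = (\<Sum>k'\<in>{..k}. c' i (\<pi> i k') t) + (\<Sum>k'\<in>{..k}. if P' (\<pi> i k') then r i * (s - t) else 0)"
        unfolding sum.distrib[symmetric] P'_def
        by (rule sum.cong[OF refl], rule eq2[OF sa(1) sa(3) i pim]) auto
      have u1: "(\<Sum>k'\<in>{..k}. if P (\<pi> i k') then r i * (s - t) else 0) = (if \<exists>k'\<in>{..k}. P (\<pi> i k') then r i * (s - t) else 0)"
        by (rule sum_single_if[OF _ injk]) (auto simp: P_def intro: eats_unique)
      have u2: "(\<Sum>k'\<in>{..k}. if P' (\<pi> i k') then r i * (s - t) else 0) = (if \<exists>k'\<in>{..k}. P' (\<pi> i k') then r i * (s - t) else 0)"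
        by (rule sum_single_if[OF _ injk]) (auto simp: P'_def intro: eats_unique)
      have imp: "\<exists>k'\<in>{..k}. P (\<pi> i k')" if ex: "\<exists>k'\<in>{..k}. P' (\<pi> i k')"
      proof -
        obtain k' where k': "k' \<le> k" "P' (\<pi> i k')" using ex by auto
        have "0 < remf n q c t (\<pi> i k')" using av[OF t pim[OF k'(1)]] k'(2) unfolding P'_def by blast
        then obtain k'' where "k'' \<le> k'" "eats m \<pi> (remf n q c t) i (\<pi> i k'')"
          using eats_exists[of k' m "remf n q c t" \<pi> i] k'(1) k by auto
        thus ?thesis using k'(1) unfolding P_def by auto
      qed
      have "0 \<le> r i * (s - t)" using runl.rpos[OF R] i s by auto
      thus "h t \<le> h s" unfolding h_def s1 s2 u1 u2 using imp by auto
    qed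
  qed
  moreover have "h 0 = 0" unfolding h_def using runl.c0[OF R] runl.c0[OF R'] by simp
  moreover have "h T = c i (\<pi> i k) T - c' i (\<pi> i k) T"
  proof -
    have "h T = (\<Sum>k'<k. c i (\<pi> i k') T - c' i (\<pi> i k') T) + (c i (\<pi> i k) T - c' i (\<pi> i k) T)"
      unfolding h_def sum_subtractf[symmetric] lessThan_Suc_atMost[symmetric] by simp
    also have "(\<Sum>k'<k. c i (\<pi> i k') T - c' i (\<pi> i k') T) = 0" using eq by simp
    finally show ?thesis by simp
  qed
  ultimately show ?thesis by simp
qed

lemma nolag:
  assumes R: "runl n m q r \<pi> c" and R': "runl n m q r \<sigma> c'"
    and bijp: "\<forall>i<n. bij_betw (\<pi> i) {..<m} {..<m}"
    and S: "S \<subseteq> {..<n}" "S \<noteq> {}"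
    and qS: "\<forall>j<m. (\<Sum>i\<in>S. r i) \<le> q j"
    and nm: "\<forall>i<n. i \<notin> S \<longrightarrow> (\<forall>k<m. \<sigma> i k = \<pi> i k)"
    and weak: "\<forall>i\<in>S. (\<forall>j<m. c' i j 1 = c i j 1) \<or>
        (\<exists>k0<m. (\<forall>k'<k0. c' i (\<pi> i k') 1 = c i (\<pi> i k') 1) \<and> c i (\<pi> i k0) 1 < c' i (\<pi> i k0) 1)"
    and tt: "0 \<le> t" "t \<le> 1" and j: "j < m" and rj: "remf n q c t j \<le> 0"
  shows "remf n q c' t j \<le> 0"
proof (rule ccontr)
  assume "\<not> remf n q c' t j \<le> 0"
  hence rj': "0 < remf n q c' t j" by simp
  have pim: "\<pi> i k < m" if "i < n" "k < m" for i k
    using bijp that bij_betwE by blast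
  define G where "G = {g. g < m \<and> (\<exists>t. 0 \<le> t \<and> t \<le> 1 \<and> remf n q c t g \<le> 0 \<and> 0 < remf n q c' t g)}"
  define Z where "Z g = {t. 0 \<le> t \<and> t \<le> 1 \<and> remf n q c t g \<le> 0}" for g
  define E where "E g = Inf (Z g)" for g
  have jG: "j \<in> G" unfolding G_def using tt j rj rj' by auto
  have finG: "finite G" unfolding G_def by (rule finite_subset[of _ "{..<m}"]) auto
  have EZ: "E g \<in> Z g" and Elow: "\<And>t. t \<in> Z g \<Longrightarrow> E g \<le> t" and Epos: "0 < remf n q c' (E g) g"
    if gG0: "g \<in> G" for g
  proof -
    obtain t0 where t0: "0 \<le> t0" "t0 \<le> 1" "remf n q c t0 g \<le> 0" "0 < remf n q c' t0 g" and gm: "g < m"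
      using gG0 unfolding G_def by auto
    have ne: "Z g \<noteq> {}" using t0 unfolding Z_def by auto
    have bdd: "bdd_below (Z g)" unfolding Z_def by (rule bdd_belowI[of _ 0]) auto
    have "Z g = {0..1} \<inter> (\<lambda>t. remf n q c t g) -` {..0}" unfolding Z_def by auto
    moreover have "closed ({0..1} \<inter> (\<lambda>t. remf n q c t g) -` {..0})"
      by (rule continuous_closed_preimage[OF runl.rem_cont[OF R]]) auto
    ultimately have cl: "closed (Z g)" by simp
    show ez: "E g \<in> Z g" unfolding E_def by (rule closed_contains_Inf[OF ne bdd cl])
    show lo: "\<And>t. t \<in> Z g \<Longrightarrow> E g \<le> t" unfolding E_def using bdd by (simp add: cInf_lower)
    have "E g \<le> t0" using lo t0 unfolding Z_def by auto
    moreover have "0 \<le> E g" using ez unfolding Z_def by auto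
    ultimately have "remf n q c' t0 g \<le> remf n q c' (E g) g"
      using runl.rem_anti[OF R' _ _ t0(2) gm] by auto
    thus "0 < remf n q c' (E g) g" using t0 by auto
  qed
  define \<tau> where "\<tau> = Min (E ` G)"
  have "\<tau> \<in> E ` G" unfolding \<tau>_def using finG jG by (intro Min_in) auto
  then obtain g where gG: "g \<in> G" and gt: "E g = \<tau>" by auto
  have gm: "g < m" using gG unfolding G_def by auto
  have tau01: "0 \<le> \<tau>" "\<tau> \<le> 1" using EZ[OF gG] gt unfolding Z_def by auto
  have remg: "remf n q c \<tau> g = 0"
    using EZ[OF gG] gt runl.remnn[OF R tau01 gm] unfolding Z_def by auto
  have remg': "0 < remf n q c' \<tau> g" using Epos[OF gG] gt by simp
  have before: "remf n q c' t k \<le> 0" if "0 \<le> t" "t < \<tau>" "k < m" "remf n q c t k \<le> 0" for t k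
  proof (rule ccontr)
    assume "\<not> remf n q c' t k \<le> 0"
    hence kG: "k \<in> G" unfolding G_def using that tau01 by auto
    hence "E k \<le> t" using Elow[OF kG] that tau01 unfolding Z_def by auto
    moreover have "\<tau> \<le> E k" unfolding \<tau>_def using finG kG by simp
    ultimately show False using that by simp
  qed
  have avail: "0 < remf n q c t j" if "0 \<le> t" "t < \<tau>" "j < m" "eats m \<sigma> (remf n q c' t) i j" for t j i
    using before[OF that(1-3)] eats_avail[OF that(4)] by force
  have transfer: "eats m \<sigma> (remf n q c' t') i g"
    if th: "i < n" "i \<notin> S" "0 \<le> t0" "t0 < \<tau>" "t0 \<le> t'" "t' \<le> 1" "eats m \<pi> (remf n q c t0) i g"
      "0 < remf n q c' t' g" for i t0 t'
  proof -
    obtain kg where kg: "kg < m" "g = \<pi> i kg" "\<forall>k<kg. \<not> 0 < remf n q c t0 (\<pi> i k)"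
      using th(7) unfolding eats_iff by blast
    have "\<forall>k<kg. \<not> 0 < remf n q c' t' (\<pi> i k)"
    proof (intro allI impI)
      fix k assume "k < kg"
      hence km: "\<pi> i k < m" using kg th(1) pim by auto
      have "remf n q c' t0 (\<pi> i k) \<le> 0" using before[OF th(3,4) km] kg \<open>k < kg\<close> by force
      moreover have "remf n q c' t' (\<pi> i k) \<le> remf n q c' t0 (\<pi> i k)"
        using runl.rem_anti[OF R' th(3,5,6) km] .
      ultimately show "\<not> 0 < remf n q c' t' (\<pi> i k)" by simp
    qed
    hence "eats m \<pi> (remf n q c' t') i g" unfolding eats_iff using kg th(8) by blast
    thus ?thesis using eats_cong[of m \<sigma> i \<pi> "remf n q c' t'" g] nm th(1,2) by auto
  qed
  have cnon: "c i g \<tau> \<le> c' i g \<tau>" if i: "i < n" "i \<notin> S" for i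
  proof -
    have "(\<lambda>s. c' i g s - c i g s) 0 \<le> (\<lambda>s. c' i g s - c i g s) \<tau>"
    proof (rule real_induct_mono[OF tau01(1)])
      show "continuous_on {0..\<tau>} (\<lambda>s. c' i g s - c i g s)"
        by (intro continuous_intros runl.cont_sub[OF R] runl.cont_sub[OF R']) (use tau01 in auto)
      fix t assume t: "0 \<le> t" "t < \<tau>"
      have t0: "0 \<le> t" and t1: "t < 1" using t tau01 by auto
      obtain e1 where e1: "e1 > 0" and e11: "t + e1 \<le> 1" and eq1: "\<And>s i j. t \<le> s \<Longrightarrow> s \<le> t + e1 \<Longrightarrow> i < n \<Longrightarrow> j < m \<Longrightarrow>
         c i j s = c i j t + (if eats m \<pi> (remf n q c t) i j then r i * (s - t) else 0)"
        by (rule runl.locE[OF R t0 t1]) blast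
      obtain e2 where e2: "e2 > 0" and e21: "t + e2 \<le> 1" and eq2: "\<And>s i j. t \<le> s \<Longrightarrow> s \<le> t + e2 \<Longrightarrow> i < n \<Longrightarrow> j < m \<Longrightarrow>
         c' i j s = c' i j t + (if eats m \<sigma> (remf n q c' t) i j then r i * (s - t) else 0)"
        by (rule runl.locE[OF R' t0 t1]) blast
      have imp: "eats m \<sigma> (remf n q c' t) i g" if "eats m \<pi> (remf n q c t) i g"
      proof (rule transfer[OF i t0 t(2) order.refl])
        show "t \<le> 1" using t1 by simp
        show "eats m \<pi> (remf n q c t) i g" by fact
        have "remf n q c' \<tau> g \<le> remf n q c' t g" using runl.rem_anti[OF R' t0 _ tau01(2) gm] t by auto
        thus "0 < remf n q c' t g" using remg' by simp
      qed
      have rp: "0 < r i" using runl.rpos[OF R] i by auto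
      show "\<exists>\<epsilon>>0. \<forall>s. t \<le> s \<and> s \<le> t + \<epsilon> \<and> s \<le> \<tau> \<longrightarrow> c' i g t - c i g t \<le> c' i g s - c i g s"
      proof (intro exI[of _ "min e1 e2"] conjI allI impI)
        show "min e1 e2 > 0" using e1 e2 by auto
        fix s assume s: "t \<le> s \<and> s \<le> t + min e1 e2 \<and> s \<le> \<tau>"
        have sa: "t \<le> s" "s \<le> t + e1" "s \<le> t + e2" using s by auto
        note a1 = eq1[OF sa(1) sa(2) i(1) gm] and a2 = eq2[OF sa(1) sa(3) i(1) gm]
        show "c' i g t - c i g t \<le> c' i g s - c i g s"
          unfolding a1 a2 using imp rp sa by auto
      qed
    qed
    thus ?thesis using runl.c0[OF R] runl.c0[OF R'] by simp
  qed
  have cmem: "c i g \<tau> \<le> c' i g 1" if iS: "i \<in> S" for i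
  proof -
    have i: "i < n" using iS S by auto
    show ?thesis
    proof (cases "c i g \<tau> \<le> c' i g \<tau>")
      case True
      thus ?thesis using runl.cmono[OF R' tau01(1) tau01(2) order.refl i gm] by simp
    next
      case False
      hence "c i g 0 < c i g \<tau>"
        using runl.c0[OF R] runl.cnn[OF R' tau01 i gm] by simp
      then obtain t0 where t0: "0 \<le> t0" "t0 < \<tau>" "eats m \<pi> (remf n q c t0) i g"
        using runl.cstart[OF R order.refl tau01 i gm] by auto
      obtain kg where kg: "kg < m" "g = \<pi> i kg" "\<forall>k<kg. \<not> 0 < remf n q c t0 (\<pi> i k)"
        using t0(3) unfolding eats_iff by blast
      have t01: "t0 \<le> 1" using t0 tau01 by simp
      have fin: "c i (\<pi> i k) 1 = c i (\<pi> i k) \<tau> \<and> c' i (\<pi> i k) 1 = c' i (\<pi> i k) \<tau>" if "k < kg" for k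
      proof -
        have km: "\<pi> i k < m" using pim[OF i] that kg by auto
        have r0: "remf n q c t0 (\<pi> i k) \<le> 0" using kg that by force
        have r0': "remf n q c' t0 (\<pi> i k) \<le> 0" using before[OF t0(1,2) km r0] .
        show ?thesis
          using runl.cstuck[OF R t0(1) t01 order.refl i km r0] runl.cstuck[OF R t0(1) _ tau01(2) i km r0]
            runl.cstuck[OF R' t0(1) t01 order.refl i km r0'] runl.cstuck[OF R' t0(1) _ tau01(2) i km r0'] t0
          by auto
      qed
      have gfin: "c i g 1 = c i g \<tau>"
        using runl.cstuck[OF R tau01(1) tau01(2) order.refl i gm] remg by simp
      from weak iS consider (eq) "\<forall>j<m. c' i j 1 = c i j 1"
        | (st) k0 where "k0 < m" "\<forall>k'<k0. c' i (\<pi> i k') 1 = c i (\<pi> i k') 1" "c i (\<pi> i k0) 1 < c' i (\<pi> i k0) 1"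
        by blast
      thus ?thesis
      proof cases
        case eq thus ?thesis using gfin gm by simp
      next
        case st
        consider "k0 < kg" | "k0 = kg" | "kg < k0" by linarith
        thus ?thesis
        proof cases
          case 1
          have "c' i (\<pi> i k0) \<tau> \<le> c i (\<pi> i k0) \<tau>"
          proof (rule lex[OF R R' i _ tau01 _ st(1)])
            show "bij_betw (\<pi> i) {..<m} {..<m}" using bijp i by auto
            show "\<And>t j. 0 \<le> t \<Longrightarrow> t < \<tau> \<Longrightarrow> j < m \<Longrightarrow> eats m \<sigma> (remf n q c' t) i j \<Longrightarrow> 0 < remf n q c t j"
              using avail by blast
            fix k' assume "k' < k0"
            thus "c' i (\<pi> i k') \<tau> = c i (\<pi> i k') \<tau>" using fin[of k'] st(2) 1 by auto
          qed
          thus ?thesis using fin[OF 1] st(3) by simp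
        next
          case 2 thus ?thesis using st(3) kg gfin by simp
        next
          case 3 thus ?thesis using st(2) kg gfin by simp
        qed
      qed
    qed
  qed
  have all_le: "c i g \<tau> \<le> c' i g 1" if "i < n" for i
  proof (cases "i \<in> S")
    case True thus ?thesis by (rule cmem)
  next
    case False
    thus ?thesis using cnon[OF that False] runl.cmono[OF R' tau01(1) tau01(2) order.refl that gm] by simp
  qed
  have sum_c: "(\<Sum>i<n. c i g \<tau>) = q g" using remg unfolding remf_def by simp
  have sum_c1: "(\<Sum>i<n. c' i g 1) \<le> q g" using runl.remnn[OF R' _ order.refl gm] unfolding remf_def by simp
  have sum_ct: "(\<Sum>i<n. c' i g \<tau>) < q g" using remg' unfolding remf_def by simp
  have "(\<Sum>i<n. c' i g 1 - c i g \<tau>) \<le> 0" using sum_c sum_c1 by (simp add: sum_subtractf)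
  hence alleq: "c' i g 1 = c i g \<tau>" if "i < n" for i
    using sum_nonneg_eq_0_iff[of "{..<n}" "\<lambda>i. c' i g 1 - c i g \<tau>"] all_le that
    by (smt (verit) finite_lessThan lessThan_iff sum_nonneg)
  have tau1: "\<tau> < 1"
  proof (rule ccontr)
    assume "\<not> \<tau> < 1"
    hence "\<tau> = 1" using tau01 by simp
    hence "(\<Sum>i<n. c' i g 1) = (\<Sum>i<n. c i g \<tau>)" using alleq by simp
    thus False using sum_ct sum_c \<open>\<tau> = 1\<close> by simp
  qed
  have post0: "c' i g 1 = c' i g \<tau>" if "i < n" "i \<notin> S" for i
    using alleq[OF that(1)] cnon[OF that] runl.cmono[OF R' tau01(1) tau01(2) order.refl that(1) gm] by simp
  have cnon0: "c i g \<tau> = 0" if i: "i < n" "i \<notin> S" for i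
  proof -
    have "c i g \<tau> = c i g 0"
    proof (rule runl.cnever[OF R order.refl tau01 i(1) gm])
      fix t0 assume t0: "0 \<le> t0" "t0 < \<tau>"
      show "\<not> eats m \<pi> (remf n q c t0) i g"
      proof
        assume ea: "eats m \<pi> (remf n q c t0) i g"
        have "eats m \<sigma> (remf n q c' \<tau>) i g"
          by (rule transfer[OF i t0(1) t0(2) _ tau01(2) ea remg']) (use t0 in simp)
        obtain e where e: "e > 0" and e1: "\<tau> + e \<le> 1" and eq: "\<And>s i j. \<tau> \<le> s \<Longrightarrow> s \<le> \<tau> + e \<Longrightarrow> i < n \<Longrightarrow> j < m \<Longrightarrow>
           c' i j s = c' i j \<tau> + (if eats m \<sigma> (remf n q c' \<tau>) i j then r i * (s - \<tau>) else 0)"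
          by (rule runl.locE[OF R' tau01(1) tau1]) blast
        have "c' i g (\<tau> + e) = c' i g \<tau> + r i * e"
          using eq[of "\<tau> + e" i g] e i gm \<open>eats m \<sigma> _ i g\<close> by simp
        moreover have "c' i g (\<tau> + e) \<le> c' i g 1"
          using runl.cmono[OF R' _ e1 order.refl i(1) gm] tau01 e by simp
        moreover have "0 < r i" using runl.rpos[OF R] i by simp
        ultimately show False using post0[OF i] e by (smt (verit) mult_pos_pos)
      qed
    qed
    thus ?thesis using runl.c0[OF R] by simp
  qed
  have finS: "finite S" using S(1) finite_subset by blast
  have "q g = (\<Sum>i\<in>S. c i g \<tau>)"
    unfolding sum_c[symmetric] using S(1) cnon0 by (intro sum.mono_neutral_right) auto
  also have "\<dots> \<le> (\<Sum>i\<in>S. r i * \<tau>)"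
  proof (rule sum_mono)
    fix i assume "i \<in> S"
    hence i: "i < n" using S by auto
    show "c i g \<tau> \<le> r i * \<tau>" using runl.cslope[OF R order.refl tau01 i gm] runl.c0[OF R] by simp
  qed
  also have "\<dots> = \<tau> * (\<Sum>i\<in>S. r i)" by (simp add: sum_distrib_left mult.commute)
  also have "\<dots> < (\<Sum>i\<in>S. r i)"
  proof -
    have "0 < (\<Sum>i\<in>S. r i)" using finS S runl.rpos[OF R] by (intro sum_pos) auto
    thus ?thesis using tau1 by simp
  qed
  finally show False using qS gm by force
qed

lemma rate_nn: "\<forall>i<n. 0 < r i \<Longrightarrow> 0 \<le> eat_rate n m r b rem j"
  unfolding eat_rate_def by (intro sum_nonneg) auto

lemma rate_pos_avail: "0 < eat_rate n m r b rem j \<Longrightarrow> 0 < rem j"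
proof -
  assume "0 < eat_rate n m r b rem j"
  hence "\<exists>i<n. eats m b rem i j" unfolding eat_rate_def
    by (smt (verit, ccfv_SIG) lessThan_iff sum.neutral)
  then obtain i where "i < n" "eats m b rem i j" by blast
  thus ?thesis using eats_avail by blast
qed

lemma rate_zero: "\<forall>j<m. \<not> 0 < rem j \<Longrightarrow> j < m \<Longrightarrow> eat_rate n m r b rem j = 0"
  unfolding eat_rate_def using eats_avail by (intro sum.neutral) force

lemma eaten_lt:
  assumes "bij_betw (b i) {..<m} {..<m}" "eats m b rem i j" shows "j < m"
  using assms unfolding eats_iff using bij_betwE by blast

lemma rate_sum:
  assumes bij: "\<forall>i<n. bij_betw (b i) {..<m} {..<m}" and av: "\<exists>j<m. 0 < rem j"
  shows "(\<Sum>j<m. eat_rate n m r b rem j) = (\<Sum>i<n. r i)"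
proof -
  have "(\<Sum>j<m. eat_rate n m r b rem j) = (\<Sum>i<n. \<Sum>j<m. if eats m b rem i j then r i else 0)"
    unfolding eat_rate_def by (rule sum.swap)
  also have "\<dots> = (\<Sum>i<n. r i)"
  proof (rule sum.cong[OF refl])
    fix i assume "i \<in> {..<n}"
    hence bi: "bij_betw (b i) {..<m} {..<m}" using bij by auto
    obtain j0 where j0: "j0 < m" "0 < rem j0" using av by blast
    obtain k0 where "k0 < m" "b i k0 = j0" using bi j0 unfolding bij_betw_def by (metis imageE lessThan_iff)
    then obtain k' where "eats m b rem i (b i k')" using eats_exists[of k0 m rem b i] j0 by auto
    define e where "e = b i k'"
    have ee: "eats m b rem i e" unfolding e_def by fact
    have em: "e < m" by (rule eaten_lt[OF bi ee])
    have "(\<Sum>j<m. if eats m b rem i j then r i else 0) = (\<Sum>j<m. if j = e then r i else 0)"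
    proof (rule sum.cong[OF refl])
      fix x show "(if eats m b rem i x then r i else 0) = (if x = e then r i else 0)"
      proof (cases "eats m b rem i x")
        case True hence "x = e" using ee eats_unique[of m b rem i x e] by blast
        thus ?thesis using True by simp
      next
        case False hence "x \<noteq> e" using ee by blast
        thus ?thesis using False by simp
      qed
    qed
    also have "\<dots> = r i" using em by simp
    finally show "(\<Sum>j<m. if eats m b rem i j then r i else 0) = r i" .
  qed
  finally show ?thesis .
qed

lemma eats_pos_cong:
  assumes "\<And>k. k < m \<Longrightarrow> (0 < rem1 (b i k)) = (0 < rem2 (b i k))"
  shows "eats m b rem1 i j = eats m b rem2 i j"
proof -
  have "(\<exists>kg<m. j = b i kg \<and> 0 < rem1 j \<and> (\<forall>k<kg. \<not> 0 < rem1 (b i k))) =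
        (\<exists>kg<m. j = b i kg \<and> 0 < rem2 j \<and> (\<forall>k<kg. \<not> 0 < rem2 (b i k)))"
  proof -
    have "(\<forall>k<kg. \<not> 0 < rem1 (b i k)) = (\<forall>k<kg. \<not> 0 < rem2 (b i k))" if "kg < m" for kg
      using assms that by auto
    thus ?thesis using assms by blast
  qed
  thus ?thesis unfolding eats_iff .
qed

lemma seg_exists:
  fixes f :: "nat \<Rightarrow> real"
  assumes "mono f" "f 0 \<le> t" "t < f N"
  shows "\<exists>k<N. f k \<le> t \<and> t < f (Suc k)"
  using assms(2,3)
proof (induction N)
  case 0 thus ?case by simp
next
  case (Suc N)
  show ?case
  proof (cases "f N \<le> t")
    case True thus ?thesis using Suc by auto
  next
    case False
    then obtain k where "k < N" "f k \<le> t" "t < f (Suc k)" using Suc by auto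
    thus ?thesis by (intro exI[of _ k]) simp
  qed
qed

lemma seg_exists_le:
  fixes f :: "nat \<Rightarrow> real"
  assumes "mono f" "f 0 \<le> t" "t \<le> f N" "0 < N"
  shows "\<exists>k<N. f k \<le> t \<and> t \<le> f (Suc k)"
proof (cases "t < f N")
  case True thus ?thesis using seg_exists[OF assms(1,2) True] by force
next
  case False
  hence "t = f N" using assms by simp
  moreover obtain N' where "N = Suc N'" using assms(4) by (cases N) auto
  moreover have "f N' \<le> f N" using assms(1) \<open>N = Suc N'\<close> by (simp add: monoD)
  ultimately show ?thesis by force
qed

locale sgr =
  fixes n m :: nat and q r :: "nat \<Rightarrow> real" and b :: "nat \<Rightarrow> nat \<Rightarrow> nat"
  assumes qpos: "\<forall>j<m. 0 < q j" and rpos: "\<forall>i<n. 0 < r i"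
    and sumeq: "(\<Sum>j<m. q j) = (\<Sum>i<n. r i)"
    and bij: "\<forall>i<n. bij_betw (b i) {..<m} {..<m}" and npos: "0 < n"
begin

definition st :: "nat \<Rightarrow> real \<times> (nat \<Rightarrow> real) \<times> (nat \<Rightarrow> nat \<Rightarrow> real)" where
  "st k = (sg_step n m r b ^^ k) (0, q, \<lambda>i j. 0)"
definition "tk k = fst (st k)"
definition "rk k = fst (snd (st k))"
definition "ak k = snd (snd (st k))"
definition "dk k = phase_len n m r b (tk k) (rk k)"
abbreviation "rt k j \<equiv> eat_rate n m r b (rk k) j"

lemma st_Suc: "st (Suc k) = sg_step n m r b (st k)" unfolding st_def by simp

lemma step_eqs:
  "tk (Suc k) = tk k + dk k"
  "rk (Suc k) j = rk k j - rt k j * dk k"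
  "ak (Suc k) i j = ak k i j + (if i < n \<and> eats m b (rk k) i j then r i * dk k else 0)"
proof -
  obtain t rm a where e: "st k = (t, rm, a)" by (cases "st k") auto
  show "tk (Suc k) = tk k + dk k"
    unfolding tk_def dk_def rk_def st_Suc sg_step_def e by (simp add: Let_def)
  show "rk (Suc k) j = rk k j - rt k j * dk k"
    unfolding tk_def dk_def rk_def st_Suc sg_step_def e by (simp add: Let_def)
  show "ak (Suc k) i j = ak k i j + (if i < n \<and> eats m b (rk k) i j then r i * dk k else 0)"
    unfolding tk_def dk_def rk_def ak_def st_Suc sg_step_def e by (simp add: Let_def)
qed

lemma st0: "tk 0 = 0" "rk 0 = q" "ak 0 = (\<lambda>i j. 0)"
  unfolding tk_def rk_def ak_def st_def by simp_all

lemma SG_ak: "SG n m q r b = ak m" unfolding SG_def ak_def st_def by simp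

lemma rt_nn: "0 \<le> rt k j" using rate_nn rpos by blast

lemma phase:
  assumes t: "0 \<le> tk k" "tk k \<le> 1" and rn: "\<forall>j<m. 0 \<le> rk k j"
  shows "0 \<le> dk k" "dk k \<le> 1 - tk k"
    "\<And>j. j < m \<Longrightarrow> 0 < rt k j \<Longrightarrow> dk k \<le> rk k j / rt k j"
    "dk k = 1 - tk k \<or> (\<exists>j<m. 0 < rt k j \<and> dk k = rk k j / rt k j)"
proof -
  define A where "A = {j. j < m \<and> 0 < rt k j}"
  define M where "M = insert (1 - tk k) ((\<lambda>j. rk k j / rt k j) ` A)"
  have dM: "dk k = Min M" unfolding dk_def phase_len_def M_def A_def by simp
  have fin: "finite M" unfolding M_def A_def by auto
  have ne: "M \<noteq> {}" unfolding M_def by auto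
  have nn: "\<forall>x\<in>M. 0 \<le> x" unfolding M_def A_def using t rn rt_nn by auto
  show "0 \<le> dk k" unfolding dM using fin ne nn by simp
  show "dk k \<le> 1 - tk k" unfolding dM M_def using fin M_def by (intro Min_le) auto
  show "\<And>j. j < m \<Longrightarrow> 0 < rt k j \<Longrightarrow> dk k \<le> rk k j / rt k j"
    unfolding dM using fin unfolding M_def A_def by (intro Min_le) auto
  have "Min M \<in> M" using fin ne by (rule Min_in)
  thus "dk k = 1 - tk k \<or> (\<exists>j<m. 0 < rt k j \<and> dk k = rk k j / rt k j)"
    unfolding dM unfolding M_def A_def by auto
qed

definition inv :: "nat \<Rightarrow> bool" where
  "inv k \<longleftrightarrow> 0 \<le> tk k \<and> tk k \<le> 1 \<and> (\<forall>j<m. 0 \<le> rk k j) \<and> (\<forall>j. rk k j = q j - (\<Sum>i<n. ak k i j))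
     \<and> (\<Sum>j<m. rk k j) = (\<Sum>j<m. q j) - tk k * (\<Sum>i<n. r i)
     \<and> (tk k = 1 \<or> k \<le> card {j. j < m \<and> rk k j \<le> 0})"

lemma inv0: "inv 0"
  unfolding inv_def st0 using qpos by (auto intro: less_imp_le)

lemma sumr_pos: "0 < (\<Sum>i<n. r i)" using npos rpos by (intro sum_pos) auto

lemma inv_Suc:
  assumes I: "inv k" shows "inv (Suc k)"
proof -
  have t: "0 \<le> tk k" "tk k \<le> 1" and rn: "\<forall>j<m. 0 \<le> rk k j"
    and ra: "\<forall>j. rk k j = q j - (\<Sum>i<n. ak k i j)"
    and cons: "(\<Sum>j<m. rk k j) = (\<Sum>j<m. q j) - tk k * (\<Sum>i<n. r i)"
    and cnt: "tk k = 1 \<or> k \<le> card {j. j < m \<and> rk k j \<le> 0}"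
    using I unfolding inv_def by blast+
  note P = phase[OF t rn]
  have t': "0 \<le> tk (Suc k)" "tk (Suc k) \<le> 1" using P(1,2) t unfolding step_eqs by auto
  have rdle: "rt k j * dk k \<le> rk k j" if "j < m" for j
  proof (cases "0 < rt k j")
    case True
    hence "dk k * rt k j \<le> rk k j" using P(3)[OF that True] by (simp add: pos_le_divide_eq)
    thus ?thesis by (simp add: mult.commute)
  next
    case False hence "rt k j = 0" using rt_nn[of k j] by simp
    thus ?thesis using rn that by simp
  qed
  have rdnn: "0 \<le> rt k j * dk k" for j using rt_nn P(1) by simp
  have rn': "\<forall>j<m. 0 \<le> rk (Suc k) j" unfolding step_eqs using rdle by simp
  have ra': "\<forall>j. rk (Suc k) j = q j - (\<Sum>i<n. ak (Suc k) i j)"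
  proof
    fix j
    have "(\<Sum>i<n. ak (Suc k) i j) = (\<Sum>i<n. ak k i j) + (\<Sum>i<n. if eats m b (rk k) i j then r i * dk k else 0)"
      unfolding step_eqs sum.distrib by (intro arg_cong2[where f="(+)"] refl sum.cong) auto
    also have "(\<Sum>i<n. if eats m b (rk k) i j then r i * dk k else 0) = rt k j * dk k"
      unfolding eat_rate_def sum_distrib_right by (intro sum.cong) auto
    finally show "rk (Suc k) j = q j - (\<Sum>i<n. ak (Suc k) i j)" unfolding step_eqs using ra by simp
  qed
  have cons': "(\<Sum>j<m. rk (Suc k) j) = (\<Sum>j<m. q j) - tk (Suc k) * (\<Sum>i<n. r i)"
  proof (cases "\<exists>j<m. 0 < rk k j")
    case True
    have "(\<Sum>j<m. rk (Suc k) j) = (\<Sum>j<m. rk k j) - (\<Sum>j<m. rt k j) * dk k"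
      unfolding step_eqs by (simp add: sum_subtractf sum_distrib_right)
    also have "(\<Sum>j<m. rt k j) = (\<Sum>i<n. r i)" by (rule rate_sum[OF bij True])
    finally show ?thesis unfolding step_eqs(1) using cons by (simp add: algebra_simps)
  next
    case False
    hence "\<forall>j<m. rk k j = 0" using rn by force
    hence "(\<Sum>j<m. rk k j) = 0" by simp
    hence "tk k * (\<Sum>i<n. r i) = (\<Sum>i<n. r i)" using cons sumeq by simp
    hence "tk k = 1" using sumr_pos by simp
    hence "dk k = 0" using P(1,2) by simp
    thus ?thesis unfolding step_eqs using cons by simp
  qed
  have cnt': "tk (Suc k) = 1 \<or> Suc k \<le> card {j. j < m \<and> rk (Suc k) j \<le> 0}"
  proof (cases "tk (Suc k) = 1")
    case True thus ?thesis by simp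
  next
    case False
    hence lt: "tk k + dk k < 1" using t' unfolding step_eqs by simp
    hence "tk k \<noteq> 1" using P(1) by auto
    hence kc: "k \<le> card {j. j < m \<and> rk k j \<le> 0}" using cnt by simp
    have "dk k \<noteq> 1 - tk k" using lt by simp
    then obtain j0 where j0: "j0 < m" "0 < rt k j0" "dk k = rk k j0 / rt k j0" using P(4) by blast
    have r0: "0 < rk k j0" using rate_pos_avail[OF j0(2)] .
    have r0': "rk (Suc k) j0 = 0" unfolding step_eqs using j0 by simp
    define X where "X = {j. j < m \<and> rk k j \<le> 0}"
    define X' where "X' = {j. j < m \<and> rk (Suc k) j \<le> 0}"
    have "insert j0 X \<subseteq> X'" unfolding X_def X'_def step_eqs using j0 r0' rdnn
      by (auto simp: step_eqs) (smt (verit) rdnn)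
    moreover have "finite X'" unfolding X'_def by auto
    moreover have "j0 \<notin> X" unfolding X_def using r0 by auto
    moreover have "finite X" unfolding X_def by auto
    ultimately have "Suc (card X) \<le> card X'" by (metis card_insert_disjoint card_mono)
    thus ?thesis using kc unfolding X_def X'_def by simp
  qed
  show ?thesis unfolding inv_def using t' rn' ra' cons' cnt' by blast
qed

lemma inv_all: "inv k"
  by (induction k) (use inv0 inv_Suc in auto)

end

context sgr
begin

lemma tk_nn: "0 \<le> tk k" and tk_le1: "tk k \<le> 1" and rk_nn: "j < m \<Longrightarrow> 0 \<le> rk k j"
  and rk_ak: "rk k j = q j - (\<Sum>i<n. ak k i j)"
  using inv_all[of k] unfolding inv_def by blast+

lemma dk_nn: "0 \<le> dk k" using phase(1)[OF tk_nn tk_le1] rk_nn by blast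

lemma tk_mono: "mono tk"
  by (rule incseq_SucI) (simp add: step_eqs dk_nn)

lemma tk_m: "tk m = 1"
proof -
  have I: "tk m = 1 \<or> m \<le> card {j. j < m \<and> rk m j \<le> 0}"
    and cons: "(\<Sum>j<m. rk m j) = (\<Sum>j<m. q j) - tk m * (\<Sum>i<n. r i)"
    using inv_all[of m] unfolding inv_def by blast+
  show ?thesis
  proof (cases "tk m = 1")
    case False
    hence "m \<le> card {j. j < m \<and> rk m j \<le> 0}" using I by simp
    moreover have "{j. j < m \<and> rk m j \<le> 0} \<subseteq> {..<m}" by auto
    ultimately have "{j. j < m \<and> rk m j \<le> 0} = {..<m}"
      using card_subset_eq[of "{..<m}" "{j. j < m \<and> rk m j \<le> 0}"] card_mono[of "{..<m}" "{j. j < m \<and> rk m j \<le> 0}"] by simp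
    have "\<forall>j<m. rk m j = 0"
    proof (intro allI impI)
      fix j assume "j < m"
      hence "j \<in> {j. j < m \<and> rk m j \<le> 0}" using \<open>{j. j < m \<and> rk m j \<le> 0} = {..<m}\<close> by auto
      thus "rk m j = 0" using rk_nn[of j m] by auto
    qed
    hence "(\<Sum>j<m. rk m j) = 0" by simp
    hence "tk m * (\<Sum>i<n. r i) = (\<Sum>i<n. r i)" using cons sumeq by simp
    thus ?thesis using sumr_pos by simp
  qed simp
qed

lemma ak_sum: "ak k i j = (\<Sum>k'<k. if i < n \<and> eats m b (rk k') i j then r i * dk k' else 0)"
  by (induction k) (simp_all add: st0 step_eqs)

definition cf :: "nat \<Rightarrow> nat \<Rightarrow> real \<Rightarrow> real" where
  "cf i j t = (\<Sum>k<m. if i < n \<and> eats m b (rk k) i j then r i * (min (max t (tk k)) (tk (Suc k)) - tk k) else 0)"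

lemma cf_phase:
  assumes k: "k < m" and s: "tk k \<le> s" "s \<le> tk (Suc k)"
  shows "cf i j s = ak k i j + (if i < n \<and> eats m b (rk k) i j then r i * (s - tk k) else 0)"
proof -
  define E where "E k' = (i < n \<and> eats m b (rk k') i j)" for k'
  have "cf i j s = (\<Sum>k'<m. (if k' < k then (if E k' then r i * dk k' else 0) else 0)
                         + (if k' = k then (if E k then r i * (s - tk k) else 0) else 0))"
    unfolding cf_def
  proof (rule sum.cong[OF refl])
    fix k' assume "k' \<in> {..<m}"
    consider "k' < k" | "k' = k" | "k < k'" by linarith
    thus "(if i < n \<and> eats m b (rk k') i j then r i * (min (max s (tk k')) (tk (Suc k')) - tk k') else 0) =
          (if k' < k then (if E k' then r i * dk k' else 0) else 0) + (if k' = k then (if E k then r i * (s - tk k) else 0) else 0)"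
    proof cases
      case 1
      hence "tk (Suc k') \<le> tk k" using tk_mono by (simp add: monoD)
      hence "min (max s (tk k')) (tk (Suc k')) = tk (Suc k')" using s tk_mono[THEN monoD, of k' "Suc k'"] by auto
      thus ?thesis using 1 unfolding E_def step_eqs by auto
    next
      case 2 thus ?thesis using s unfolding E_def by auto
    next
      case 3
      hence "tk (Suc k) \<le> tk k'" using tk_mono by (simp add: monoD)
      hence "min (max s (tk k')) (tk (Suc k')) = tk k'" using s tk_mono[THEN monoD, of k' "Suc k'"] by auto
      thus ?thesis using 3 unfolding E_def by auto
    qed
  qed
  also have "\<dots> = (\<Sum>k'<m. if k' < k then (if E k' then r i * dk k' else 0) else 0)
                 + (\<Sum>k'<m. if k' = k then (if E k then r i * (s - tk k) else 0) else 0)"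
    by (rule sum.distrib)
  also have "(\<Sum>k'<m. if k' < k then (if E k' then r i * dk k' else 0) else 0) = (\<Sum>k'\<in>{..<m} \<inter> {..<k}. if E k' then r i * dk k' else 0)"
    by (subst sum.inter_restrict) auto
  also have "{..<m} \<inter> {..<k} = {..<k}" using k by auto
  also have "(\<Sum>k'<m. if k' = k then (if E k then r i * (s - tk k) else 0) else 0) = (if E k then r i * (s - tk k) else 0)"
    using k by simp
  finally show ?thesis unfolding ak_sum E_def by simp
qed

lemma cf_tk: "k < m \<Longrightarrow> cf i j (tk k) = ak k i j"
  using cf_phase[of k "tk k"] tk_mono[THEN monoD, of k "Suc k"] by simp

lemma cf_1: "cf i j 1 = ak m i j"
proof (cases m)
  case 0 thus ?thesis unfolding cf_def ak_sum by simp
next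
  case (Suc m')
  have "cf i j (tk (Suc m')) = ak m' i j + (if i < n \<and> eats m b (rk m') i j then r i * (tk (Suc m') - tk m') else 0)"
    using cf_phase[of m' "tk (Suc m')"] Suc tk_mono[THEN monoD, of m' "Suc m'"] by simp
  also have "\<dots> = ak (Suc m') i j" unfolding step_eqs by simp
  finally show ?thesis using tk_m Suc by simp
qed

lemma remf_phase:
  assumes k: "k < m" and s: "tk k \<le> s" "s \<le> tk (Suc k)"
  shows "remf n q cf s j = rk k j - rt k j * (s - tk k)"
proof -
  have "(\<Sum>i<n. cf i j s) = (\<Sum>i<n. ak k i j) + (\<Sum>i<n. if eats m b (rk k) i j then r i * (s - tk k) else 0)"
    unfolding cf_phase[OF k s] sum.distrib by (intro arg_cong2[where f="(+)"] refl sum.cong) auto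
  also have "(\<Sum>i<n. if eats m b (rk k) i j then r i * (s - tk k) else 0) = rt k j * (s - tk k)"
    unfolding eat_rate_def sum_distrib_right by (intro sum.cong) auto
  finally show ?thesis unfolding remf_def using rk_ak[of k j] by simp
qed

lemma pos_match:
  assumes k: "k < m" and s: "tk k \<le> s" "s < tk (Suc k)" and j: "j < m"
  shows "(0 < remf n q cf s j) = (0 < rk k j)"
proof -
  have R: "remf n q cf s j = rk k j - rt k j * (s - tk k)" using remf_phase[OF k s(1)] s(2) by simp
  show ?thesis
  proof (cases "0 < rt k j")
    case True
    have "rt k j * (s - tk k) < rt k j * dk k"
      using True s unfolding step_eqs by simp
    also have "dk k \<le> rk k j / rt k j" using phase(3)[OF tk_nn tk_le1 _ j True] rk_nn by blast
    hence "rt k j * dk k \<le> rk k j" using True by (simp add: pos_le_divide_eq mult.commute)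
    finally have "rt k j * (s - tk k) < rk k j" .
    moreover have "0 < rk k j" using rate_pos_avail[OF True] .
    ultimately show ?thesis using R by simp
  next
    case False
    hence "rt k j = 0" using rt_nn[of k j] by simp
    thus ?thesis using R by simp
  qed
qed

end

context sgr
begin

lemma cf_alt: "cf i j = (\<lambda>t. \<Sum>k<m. (if i < n \<and> eats m b (rk k) i j then r i else 0) * (min (max t (tk k)) (tk (Suc k)) - tk k))"
  unfolding cf_def by (intro ext sum.cong) auto

lemma cf_cont: "continuous_on {0..1} (cf i j)"
  unfolding cf_alt by (intro continuous_intros)

lemma cf_0: "cf i j 0 = 0"
proof -
  have h: "min (max 0 (tk k)) (tk (Suc k)) = tk k" for k
    using tk_nn[of k] tk_mono[THEN monoD, of k "Suc k"] by auto
  show ?thesis unfolding cf_alt h by simp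
qed

lemma bi_lt: "i < n \<Longrightarrow> k < m \<Longrightarrow> b i k < m"
  using bij bij_betwE by blast

lemma cf_loc:
  assumes t: "0 \<le> t" "t < 1"
  shows "\<exists>\<epsilon>>0. t + \<epsilon> \<le> 1 \<and> (\<forall>s. t \<le> s \<and> s \<le> t + \<epsilon> \<longrightarrow>
        (\<forall>i<n. \<forall>j<m. cf i j s = cf i j t + (if eats m b (remf n q cf t) i j then r i * (s - t) else 0)))"
proof -
  obtain k where k: "k < m" "tk k \<le> t" "t < tk (Suc k)"
    using seg_exists[OF tk_mono, of t m] t st0(1) tk_m by auto
  show ?thesis
  proof (intro exI[of _ "tk (Suc k) - t"] conjI allI impI)
    show "0 < tk (Suc k) - t" using k by simp
    show "t + (tk (Suc k) - t) \<le> 1" using tk_le1[of "Suc k"] by simp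
    fix s i j assume s: "t \<le> s \<and> s \<le> t + (tk (Suc k) - t)" and i: "i < n" and j: "j < m"
    have e: "eats m b (remf n q cf t) i j = eats m b (rk k) i j"
      by (rule eats_pos_cong) (use pos_match[OF k(1) k(2) k(3)] bi_lt[OF i] in blast)
    have cs: "cf i j s = ak k i j + (if i < n \<and> eats m b (rk k) i j then r i * (s - tk k) else 0)"
      using cf_phase[OF k(1), of s] s k by simp
    have ct: "cf i j t = ak k i j + (if i < n \<and> eats m b (rk k) i j then r i * (t - tk k) else 0)"
      using cf_phase[OF k(1), of t] k by simp
    show "cf i j s = cf i j t + (if eats m b (remf n q cf t) i j then r i * (s - t) else 0)"
      unfolding cs ct e using i by (simp add: algebra_simps)
  qed
qed

lemma cf_remnn:
  assumes t: "0 \<le> t" "t \<le> 1" and j: "j < m"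
  shows "0 \<le> remf n q cf t j"
proof -
  obtain k where k: "k < m" "tk k \<le> t" "t \<le> tk (Suc k)"
    using seg_exists_le[OF tk_mono, of t m] t st0(1) tk_m j by auto
  have "rt k j * (t - tk k) \<le> rt k j * dk k"
    using k rt_nn[of k j] unfolding step_eqs by (intro mult_left_mono) auto
  hence "rk (Suc k) j \<le> remf n q cf t j" unfolding remf_phase[OF k] step_eqs by simp
  thus ?thesis using rk_nn[OF j, of "Suc k"] by simp
qed

lemma exists_run: "\<exists>c. runl n m q r b c \<and> (\<forall>i j. SG n m q r b i j = c i j 1)"
proof (intro exI[of _ cf] conjI)
  show "runl n m q r b cf"
    unfolding runl_def run_def using cf_cont cf_0 cf_loc cf_remnn rpos by blast
  show "\<forall>i j. SG n m q r b i j = cf i j 1" unfolding SG_ak cf_1 by simp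
qed

end

lemma abstract_main:
  assumes R: "runl n m q r \<pi> c" and R': "runl n m q r \<sigma> c'"
    and bijp: "\<forall>i<n. bij_betw (\<pi> i) {..<m} {..<m}"
    and S: "S \<subseteq> {..<n}" "S \<noteq> {}"
    and qS: "\<forall>j<m. (\<Sum>i\<in>S. r i) \<le> q j"
    and nm: "\<forall>i<n. i \<notin> S \<longrightarrow> (\<forall>k<m. \<sigma> i k = \<pi> i k)"
    and weak: "\<forall>i\<in>S. (\<forall>j<m. c' i j 1 = c i j 1) \<or>
        (\<exists>k0<m. (\<forall>k'<k0. c' i (\<pi> i k') 1 = c i (\<pi> i k') 1) \<and> c i (\<pi> i k0) 1 < c' i (\<pi> i k0) 1)"
    and strict: "\<exists>i\<in>S. \<exists>k0<m. (\<forall>k'<k0. c' i (\<pi> i k') 1 = c i (\<pi> i k') 1) \<and> c i (\<pi> i k0) 1 < c' i (\<pi> i k0) 1"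
  shows False
proof -
  obtain i k0 where iS: "i \<in> S" and k0: "k0 < m" and eq: "\<forall>k'<k0. c' i (\<pi> i k') 1 = c i (\<pi> i k') 1"
    and gt: "c i (\<pi> i k0) 1 < c' i (\<pi> i k0) 1" using strict by blast
  have i: "i < n" using iS S by auto
  have "c' i (\<pi> i k0) 1 \<le> c i (\<pi> i k0) 1"
  proof (rule lex[OF R R' i _ _ order.refl _ k0])
    show "bij_betw (\<pi> i) {..<m} {..<m}" using bijp i by auto
    show "(0::real) \<le> 1" by simp
    fix t j assume t: "0 \<le> t" "t < 1" and j: "j < m" and ea: "eats m \<sigma> (remf n q c' t) i j"
    have "0 < remf n q c' t j" using eats_avail[OF ea] .
    thus "0 < remf n q c t j"
      using nolag[OF R R' bijp S qS nm weak t(1) _ j] t by force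
  next
    fix k' assume "k' < k0" thus "c' i (\<pi> i k') 1 = c i (\<pi> i k') 1" using eq by auto
  qed
  thus False using gt by simp
qed

theorem corollary1:
  fixes n m l :: nat and q r :: "nat \<Rightarrow> real" and \<pi> :: "nat \<Rightarrow> nat \<Rightarrow> nat"
  assumes "\<forall>j<m. 0 < q j"
    and "\<forall>i<n. 0 < r i"
    and "(\<Sum>j<m. q j) = (\<Sum>i<n. r i)"
    and "\<forall>i<n. bij_betw (\<pi> i) {..<m} {..<m}"
    and "1 \<le> l"
    and "\<forall>S. S \<subseteq> {..<n} \<and> card S = l \<longrightarrow> (\<forall>j<m. (\<Sum>i\<in>S. r i) \<le> q j)"
  shows "\<forall>S. S \<subseteq> {..<n} \<and> card S = l \<longrightarrow>
           \<not> (\<exists>\<sigma>. (\<forall>i<n. bij_betw (\<sigma> i) {..<m} {..<m})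
                 \<and> (\<forall>i<n. i \<notin> S \<longrightarrow> (\<forall>k<m. \<sigma> i k = \<pi> i k))
                 \<and> (\<forall>i\<in>S. weak_pref m (\<pi> i) (SG n m q r \<sigma> i) (SG n m q r \<pi> i))
                 \<and> (\<exists>i\<in>S. strict_pref m (\<pi> i) (SG n m q r \<sigma> i) (SG n m q r \<pi> i)))"
proof (intro allI impI notI)
  fix S assume S: "S \<subseteq> {..<n} \<and> card S = l"
  assume "\<exists>\<sigma>. (\<forall>i<n. bij_betw (\<sigma> i) {..<m} {..<m})
                 \<and> (\<forall>i<n. i \<notin> S \<longrightarrow> (\<forall>k<m. \<sigma> i k = \<pi> i k))
                 \<and> (\<forall>i\<in>S. weak_pref m (\<pi> i) (SG n m q r \<sigma> i) (SG n m q r \<pi> i))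
                 \<and> (\<exists>i\<in>S. strict_pref m (\<pi> i) (SG n m q r \<sigma> i) (SG n m q r \<pi> i))"
  then obtain \<sigma> where bs: "\<forall>i<n. bij_betw (\<sigma> i) {..<m} {..<m}"
    and nm: "\<forall>i<n. i \<notin> S \<longrightarrow> (\<forall>k<m. \<sigma> i k = \<pi> i k)"
    and wk: "\<forall>i\<in>S. weak_pref m (\<pi> i) (SG n m q r \<sigma> i) (SG n m q r \<pi> i)"
    and st: "\<exists>i\<in>S. strict_pref m (\<pi> i) (SG n m q r \<sigma> i) (SG n m q r \<pi> i)" by blast
  have Sne: "S \<noteq> {}" using S assms(5) by auto
  have Ssub: "S \<subseteq> {..<n}" using S by simp
  have npos: "0 < n" using Sne Ssub by (metis empty_subsetI lessThan_0 not_gr_zero subset_antisym)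
  interpret P: sgr n m q r \<pi> using assms(1-4) npos by unfold_locales auto
  interpret Sg: sgr n m q r \<sigma> using assms(1-3) bs npos by unfold_locales auto
  obtain c where R: "runl n m q r \<pi> c" and Rc: "\<forall>i j. SG n m q r \<pi> i j = c i j 1"
    using P.exists_run by blast
  obtain c' where R': "runl n m q r \<sigma> c'" and Rc': "\<forall>i j. SG n m q r \<sigma> i j = c' i j 1"
    using Sg.exists_run by blast
  have e1: "SG n m q r \<pi> i = (\<lambda>j. c i j 1)" for i using Rc by auto
  have e2: "SG n m q r \<sigma> i = (\<lambda>j. c' i j 1)" for i using Rc' by auto
  have qS: "\<forall>j<m. (\<Sum>i\<in>S. r i) \<le> q j" using assms(6) S by blast
  show False
  proof (rule abstract_main[OF R R' assms(4) Ssub Sne qS nm])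
    show "\<forall>i\<in>S. (\<forall>j<m. c' i j 1 = c i j 1) \<or>
        (\<exists>k0<m. (\<forall>k'<k0. c' i (\<pi> i k') 1 = c i (\<pi> i k') 1) \<and> c i (\<pi> i k0) 1 < c' i (\<pi> i k0) 1)"
      using wk unfolding e1 e2 weak_pref_def strict_pref_def by blast
    show "\<exists>i\<in>S. \<exists>k0<m. (\<forall>k'<k0. c' i (\<pi> i k') 1 = c i (\<pi> i k') 1) \<and> c i (\<pi> i k0) 1 < c' i (\<pi> i k0) 1"
      using st unfolding e1 e2 strict_pref_def by blast
  qed
qed

end
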